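(* Let $z\in\mathbb{R}^n$, $\lambda_1,\lambda_2>0$, $l\le 0\le u$ in $\mathbb{R}^n$, and for $i\in[n]$ let $\omega_i(\alpha)=\lambda_2|\alpha|_0+\delta_{[l_i,u_i]}(\alpha)$ for $\alpha\in\mathbb{R}$. Set $H(0)=-\lambda_1$ and, for $s\in[n]$, $$h_s(y;z_{1:s})=\tfrac12\|y-z_{1:s}\|^2+\lambda_1\sum_{j=1}^{s-1}|y_j-y_{j+1}|_0+\sum_{j=1}^s\omega_j(y_j)\ (y\in\mathbb{R}^s),\qquad H(s)=\min_{y\in\mathbb{R}^s}h_s(y;z_{1:s}),$$ and define $P_s:[0\!:\!s-1]\times\mathbb{R}\to(-\infty,+\infty]$ by $$P_s(i,\alpha)=H(i)+\tfrac12\|\alpha\mathbf{1}-z_{i+1:s}\|^2+\sum_{j=i+1}^s\omega_j(\alpha)+\lambda_1.$$ Fix any $s\in[n]$. Then: (i) $H(s)=\min_{i\in[0:s-1],\ \alpha\in\mathbb{R}}P_s(i,\alpha)$; (ii) if $(i_s^*,\alpha_s^* )\in\arg\min_{i\in[0:s-1],\alpha\in\mathbb{R}}P_s(i,\alpha)$, then $y^*=(y^*_{1:i_s^*};\alpha_s^*\mathbf{1})$ is a global minimizer of $\min_{y\in\mathbb{R}^s}h_s(y;z_{1:s})$, where $y^*_{1:i_s^*}\in\arg\min_{v\in\mathbb{R}^{i_s^*}}h_{i_s^*}(v;z_{1:i_s^*})$ (when $i_s^*=0$, $y^*=\alpha_s^*\mathbf{1}$).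
   Context: $|t|_0=0$ if $t=0$ and $1$ otherwise; $\delta_{[a,b]}$ is the indicator of the interval $[a,b]$. $[n]=\{1,\dots,n\}$, $[j\!:\!k]=\{j,\dots,k\}$, $z_{j:k}=(z_j,\dots,z_k)$, and $\mathbf{1}$ is the all-ones vector of the appropriate dimension. In this context $\sum_{j=1}^{s-1}|y_j-y_{j+1}|_0$ is $\|\widehat{B}y\|_0$ for the fused difference operator $\widehat B y=(y_1-y_2,\dots,y_{s-1}-y_s)$, so $H(n)$ is the optimal value of $\min_x \frac12\|x-z\|^2+\lambda_1\|\widehat Bx\|_0+\lambda_2\|x\|_0+\delta_{\{l\le x\le u\}}(x)$. *)

theory Defs
  imports "HOL-Analysis.Analysis" "HOL-Library.Extended_Real"
begin

(* Vectors in R^n / R^s are functions nat => real, indexed from 1. *)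

definition l0norm :: "real \<Rightarrow> real" where
  "l0norm t = (if t = 0 then 0 else 1)"

definition omega :: "(nat \<Rightarrow> real) \<Rightarrow> (nat \<Rightarrow> real) \<Rightarrow> real \<Rightarrow> nat \<Rightarrow> real \<Rightarrow> ereal" where
  "omega l u lam2 i a = (if l i \<le> a \<and> a \<le> u i then ereal (lam2 * l0norm a) else \<infinity>)"

definition hfun :: "(nat \<Rightarrow> real) \<Rightarrow> (nat \<Rightarrow> real) \<Rightarrow> (nat \<Rightarrow> real) \<Rightarrow> real \<Rightarrow> real
                    \<Rightarrow> nat \<Rightarrow> (nat \<Rightarrow> real) \<Rightarrow> ereal" where
  "hfun z l u lam1 lam2 s y =
     ereal (1/2 * (\<Sum>j=1..s. (y j - z j)^2) + lam1 * (\<Sum>j=1..s-1. l0norm (y j - y (j+1))))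
     + (\<Sum>j=1..s. omega l u lam2 j (y j))"

(* H(0) = -lambda1, H(s) = min_{y in R^s} h_s(y) (written as an infimum; attainment is part of the claims) *)
definition Hval :: "(nat \<Rightarrow> real) \<Rightarrow> (nat \<Rightarrow> real) \<Rightarrow> (nat \<Rightarrow> real) \<Rightarrow> real \<Rightarrow> real \<Rightarrow> nat \<Rightarrow> ereal" where
  "Hval z l u lam1 lam2 s =
     (if s = 0 then ereal (- lam1) else (INF y. hfun z l u lam1 lam2 s y))"

definition Pfun :: "(nat \<Rightarrow> real) \<Rightarrow> (nat \<Rightarrow> real) \<Rightarrow> (nat \<Rightarrow> real) \<Rightarrow> real \<Rightarrow> real
                    \<Rightarrow> nat \<Rightarrow> nat \<Rightarrow> real \<Rightarrow> ereal" where
  "Pfun z l u lam1 lam2 s i a =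
     Hval z l u lam1 lam2 i + ereal (1/2 * (\<Sum>j=i+1..s. (a - z j)^2))
     + (\<Sum>j=i+1..s. omega l u lam2 j a) + ereal lam1"

end

theory Submission
  imports Defs
begin

lemma sum_split_nat:
  fixes f :: "nat \<Rightarrow> 'a::comm_monoid_add"
  assumes "m \<le> i + 1" "i \<le> s"
  shows "sum f {m..s} = sum f {m..i} + sum f {i+1..s}"
proof -
  have "{m..s} = {m..i} \<union> {i+1..s}" using assms by auto
  then show ?thesis by (simp add: sum.union_disjoint ivl_disj_int)
qed

lemma omega_nonneg: "lam2 \<ge> 0 \<Longrightarrow> omega l u lam2 j a \<ge> 0"
  by (simp add: omega_def l0norm_def)

lemma hfun_cong:
  assumes "\<And>j. j \<in> {1..i} \<Longrightarrow> y j = v j"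
  shows "hfun z l u lam1 lam2 i y = hfun z l u lam1 lam2 i v"
proof -
  have a: "(\<Sum>j=1..i. (y j - z j)^2) = (\<Sum>j=1..i. (v j - z j)^2)"
    by (rule sum.cong) (auto simp: assms)
  have b: "(\<Sum>j=1..i-1. l0norm (y j - y (j+1))) = (\<Sum>j=1..i-1. l0norm (v j - v (j+1)))"
    by (rule sum.cong) (auto simp: assms)
  have c: "(\<Sum>j=1..i. omega l u lam2 j (y j)) = (\<Sum>j=1..i. omega l u lam2 j (v j))"
    by (rule sum.cong) (auto simp: assms)
  show ?thesis unfolding hfun_def a b c ..
qed

lemma decomp0:
  assumes "\<And>j. j \<in> {1..s} \<Longrightarrow> y j = a"
  shows "hfun z l u lam1 lam2 s y
     = ereal (1/2 * (\<Sum>j=1..s. (a - z j)^2)) + (\<Sum>j=1..s. omega l u lam2 j a)"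
proof -
  have a: "(\<Sum>j=1..s. (y j - z j)^2) = (\<Sum>j=1..s. (a - z j)^2)"
    by (rule sum.cong) (auto simp: assms)
  have b: "(\<Sum>j=1..s-1. l0norm (y j - y (j+1))) = 0"
    by (rule sum.neutral) (auto simp: assms l0norm_def)
  have c: "(\<Sum>j=1..s. omega l u lam2 j (y j)) = (\<Sum>j=1..s. omega l u lam2 j a)"
    by (rule sum.cong) (auto simp: assms)
  show ?thesis unfolding hfun_def a b c by simp
qed

lemma decomp:
  assumes "1 \<le> i" "i < s" "\<And>j. j \<in> {i+1..s} \<Longrightarrow> y j = a"
  shows "hfun z l u lam1 lam2 s y
     = hfun z l u lam1 lam2 i y + ereal (lam1 * l0norm (y i - a))
       + ereal (1/2 * (\<Sum>j=i+1..s. (a - z j)^2)) + (\<Sum>j=i+1..s. omega l u lam2 j a)"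
proof -
  define A where "A = (\<Sum>j=1..i. (y j - z j)^2)"
  define B where "B = (\<Sum>j=i+1..s. (a - z j)^2)"
  define C where "C = (\<Sum>j=1..i-1. l0norm (y j - y (j+1)))"
  define Oi where "Oi = (\<Sum>j=1..i. omega l u lam2 j (y j))"
  define Or where "Or = (\<Sum>j=i+1..s. omega l u lam2 j a)"
  have sq: "(\<Sum>j=1..s. (y j - z j)^2) = A + B"
  proof -
    have "(\<Sum>j=1..s. (y j - z j)^2) = A + (\<Sum>j=i+1..s. (y j - z j)^2)"
      unfolding A_def using assms by (intro sum_split_nat) auto
    also have "(\<Sum>j=i+1..s. (y j - z j)^2) = B"
      unfolding B_def by (rule sum.cong) (auto simp: assms)
    finally show ?thesis .
  qed
  have "(\<Sum>j=1..s-1. l0norm (y j - y (j+1)))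
      = (\<Sum>j=1..i. l0norm (y j - y (j+1))) + (\<Sum>j=i+1..s-1. l0norm (y j - y (j+1)))"
    using assms by (intro sum_split_nat) auto
  also have "(\<Sum>j=i+1..s-1. l0norm (y j - y (j+1))) = 0"
    by (rule sum.neutral) (auto simp: assms l0norm_def)
  also have "(\<Sum>j=1..i. l0norm (y j - y (j+1))) = C + l0norm (y i - a)"
  proof -
    have "(\<Sum>j=1..i. l0norm (y j - y (j+1))) = (\<Sum>j=1..i-1. l0norm (y j - y (j+1)))
         + (\<Sum>j=i-1+1..i. l0norm (y j - y (j+1)))"
      using assms by (intro sum_split_nat) auto
    moreover have "i - 1 + 1 = i" using assms by simp
    moreover have "y (i+1) = a" using assms by auto
    ultimately show ?thesis unfolding C_def by simp
  qed
  finally have l0: "(\<Sum>j=1..s-1. l0norm (y j - y (j+1))) = C + l0norm (y i - a)" by simp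
  have om: "(\<Sum>j=1..s. omega l u lam2 j (y j)) = Oi + Or"
  proof -
    have "(\<Sum>j=1..s. omega l u lam2 j (y j)) = Oi + (\<Sum>j=i+1..s. omega l u lam2 j (y j))"
      unfolding Oi_def using assms by (intro sum_split_nat) auto
    also have "(\<Sum>j=i+1..s. omega l u lam2 j (y j)) = Or"
      unfolding Or_def by (rule sum.cong) (auto simp: assms)
    finally show ?thesis .
  qed
  have L: "hfun z l u lam1 lam2 s y = ereal (1/2*(A+B) + lam1*(C + l0norm (y i - a))) + (Oi + Or)"
    unfolding hfun_def sq l0 om ..
  have R: "hfun z l u lam1 lam2 i y = ereal (1/2*A + lam1*C) + Oi"
    unfolding hfun_def A_def C_def Oi_def ..
  have e: "ereal (1/2*(A+B) + lam1*(C + l0norm (y i - a)))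
     = ereal (1/2*A + lam1*C) + ereal (lam1 * l0norm (y i - a)) + ereal (1/2*B)"
    by (simp add: algebra_simps)
  show ?thesis unfolding L R e B_def[symmetric] Or_def[symmetric]
    by (simp add: ac_simps)
qed

lemma ereal_cancel: "ereal (-c) + ereal x + B + ereal c = ereal x + B"
  by (cases B) auto

lemma P0:
  "Pfun z l u lam1 lam2 s 0 a = ereal (1/2 * (\<Sum>j=1..s. (a - z j)^2)) + (\<Sum>j=1..s. omega l u lam2 j a)"
proof -
  have "Pfun z l u lam1 lam2 s 0 a = ereal (-lam1) + ereal (1/2 * (\<Sum>j=1..s. (a - z j)^2)) + (\<Sum>j=1..s. omega l u lam2 j a) + ereal lam1"
    unfolding Pfun_def by (simp add: Hval_def)
  also have "\<dots> = ereal (1/2 * (\<Sum>j=1..s. (a - z j)^2)) + (\<Sum>j=1..s. omega l u lam2 j a)"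
    by (rule ereal_cancel)
  finally show ?thesis .
qed

lemma Hval_le:
  "1 \<le> i \<Longrightarrow> Hval z l u lam1 lam2 i \<le> hfun z l u lam1 lam2 i y"
  by (simp add: Hval_def INF_lower)

lemma Hval_eq:
  assumes "1 \<le> i" "\<forall>v'. hfun z l u lam1 lam2 i v \<le> hfun z l u lam1 lam2 i v'"
  shows "Hval z l u lam1 lam2 i = hfun z l u lam1 lam2 i v"
  using assms by (auto simp: Hval_def intro!: antisym INF_lower INF_greatest)

lemma const_tail0:
  fixes i s k :: nat and y :: "nat \<Rightarrow> real"
  assumes "\<forall>j\<in>{i+1..s-1}. y j = y (j+1)"
  shows "k + i + 1 \<le> s \<Longrightarrow> y (s - k) = y s"
proof (induction k)
  case 0 then show ?case by simp
next
  case (Suc k)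
  then have "y (s - k) = y s" by simp
  moreover have "s - Suc k \<in> {i+1..s-1}" using Suc.prems by auto
  then have "y (s - Suc k) = y (s - Suc k + 1)" using assms by blast
  moreover have "s - Suc k + 1 = s - k" using Suc.prems by simp
  ultimately show ?case by simp
qed

lemma const_tail:
  fixes i s j :: nat and y :: "nat \<Rightarrow> real"
  assumes "\<forall>j\<in>{i+1..s-1}. y j = y (j+1)" "i + 1 \<le> j" "j \<le> s"
  shows "y j = y s"
  using const_tail0[OF assms(1), of "s - j"] assms(2,3) by simp

lemma lower:
  assumes "lam1 > 0" "1 \<le> s"
  shows "\<exists>i<s. Pfun z l u lam1 lam2 s i (y s) \<le> hfun z l u lam1 lam2 s y"
proof -
  define Bk where "Bk = {j. 1 \<le> j \<and> j < s \<and> y j \<noteq> y (j+1)}"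
  define i where "i = (if Bk = {} then 0 else Max Bk)"
  have fin: "finite Bk" unfolding Bk_def by auto
  have iss: "i < s" using fin Max_in[of Bk] assms unfolding i_def by (auto simp: Bk_def)
  have nb: "\<forall>j\<in>{i+1..s-1}. y j = y (j+1)"
  proof
    fix j assume j: "j \<in> {i+1..s-1}"
    show "y j = y (j+1)"
    proof (rule ccontr)
      assume "y j \<noteq> y (j+1)"
      then have "j \<in> Bk" using j unfolding Bk_def by auto
      then have "j \<le> i" using fin unfolding i_def by auto
      then show False using j by auto
    qed
  qed
  have ct: "\<And>j. j \<in> {i+1..s} \<Longrightarrow> y j = y s"
    by (rule const_tail[OF nb]) auto
  show ?thesis
  proof (cases "i = 0")
    case True
    have "hfun z l u lam1 lam2 s y
     = ereal (1/2 * (\<Sum>j=1..s. (y s - z j)^2)) + (\<Sum>j=1..s. omega l u lam2 j (y s))"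
    proof (rule decomp0)
      fix j :: nat assume "j \<in> {1..s}"
      then show "y j = y s" using True by (intro ct) simp
    qed
    then have "Pfun z l u lam1 lam2 s 0 (y s) = hfun z l u lam1 lam2 s y"
      by (simp only: P0)
    then show ?thesis using iss True by (metis order_refl)
  next
    case False
    then have "Bk \<noteq> {}" unfolding i_def by (auto split: if_splits)
    then have "i \<in> Bk" using fin unfolding i_def by auto
    then have "y i \<noteq> y (i+1)" unfolding Bk_def by auto
    moreover have "y (i+1) = y s" by (rule ct) (use iss in simp)
    ultimately have l1: "l0norm (y i - y s) = 1" by (simp add: l0norm_def)
    have d: "hfun z l u lam1 lam2 s y
     = hfun z l u lam1 lam2 i y + ereal (lam1 * l0norm (y i - y s))
       + ereal (1/2 * (\<Sum>j=i+1..s. (y s - z j)^2)) + (\<Sum>j=i+1..s. omega l u lam2 j (y s))"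
      using decomp[OF _ iss ct] False by simp
    have "Pfun z l u lam1 lam2 s i (y s) = Hval z l u lam1 lam2 i
       + ereal (1/2 * (\<Sum>j=i+1..s. (y s - z j)^2)) + (\<Sum>j=i+1..s. omega l u lam2 j (y s)) + ereal lam1"
      by (simp add: Pfun_def)
    also have "\<dots> \<le> hfun z l u lam1 lam2 i y
       + ereal (1/2 * (\<Sum>j=i+1..s. (y s - z j)^2)) + (\<Sum>j=i+1..s. omega l u lam2 j (y s)) + ereal lam1"
      using Hval_le False by (intro add_right_mono) auto
    also have "\<dots> = hfun z l u lam1 lam2 s y" unfolding d l1 by (simp add: ac_simps)
    finally show ?thesis using iss by blast
  qed
qed

lemma upper:
  assumes "lam1 > 0" "i < s"
    and min: "\<forall>v'. hfun z l u lam1 lam2 i v \<le> hfun z l u lam1 lam2 i v'"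
  shows "hfun z l u lam1 lam2 s (\<lambda>j. if j \<le> i then v j else a) \<le> Pfun z l u lam1 lam2 s i a"
proof (cases "i = 0")
  case True
  then have "hfun z l u lam1 lam2 s (\<lambda>j. if j \<le> i then v j else a)
     = ereal (1/2 * (\<Sum>j=1..s. (a - z j)^2)) + (\<Sum>j=1..s. omega l u lam2 j a)"
    by (intro decomp0) auto
  then show ?thesis using True by (simp only: P0 order_refl)
next
  case False
  let ?y = "\<lambda>j. if j \<le> i then v j else a"
  have d: "hfun z l u lam1 lam2 s ?y
     = hfun z l u lam1 lam2 i ?y + ereal (lam1 * l0norm (?y i - a))
       + ereal (1/2 * (\<Sum>j=i+1..s. (a - z j)^2)) + (\<Sum>j=i+1..s. omega l u lam2 j a)"
    using False assms by (intro decomp) auto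
  have hv: "hfun z l u lam1 lam2 i ?y = Hval z l u lam1 lam2 i"
    using Hval_eq[of i z l u lam1 lam2 v] False min hfun_cong[of i ?y v] by auto
  have "lam1 * l0norm (?y i - a) \<le> lam1" using assms by (simp add: l0norm_def)
  then have "hfun z l u lam1 lam2 s ?y \<le> Hval z l u lam1 lam2 i + ereal lam1
       + ereal (1/2 * (\<Sum>j=i+1..s. (a - z j)^2)) + (\<Sum>j=i+1..s. omega l u lam2 j a)"
    unfolding d hv by (intro add_right_mono add_left_mono) auto
  also have "\<dots> = Pfun z l u lam1 lam2 s i a" by (simp add: Pfun_def ac_simps)
  finally show ?thesis .
qed

lemma argmin_alpha:
  assumes "lam2 > 0" "\<forall>j\<in>{1..n}. l j \<le> 0 \<and> 0 \<le> u j" "s \<le> n" "i < s"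
  shows "\<exists>a0. \<forall>a. Pfun z l u lam1 lam2 s i a0 \<le> Pfun z l u lam1 lam2 s i a"
proof -
  define q where "q a = 1/2 * (\<Sum>j=i+1..s. (a - z j)^2)" for a
  define Om where "Om a = (\<Sum>j=i+1..s. omega l u lam2 j a)" for a
  define g where "g a = ereal (q a) + Om a" for a
  define F where "F = (\<Inter>j\<in>{i+1..s}. {l j..u j})"
  have P: "Pfun z l u lam1 lam2 s i a = Hval z l u lam1 lam2 i + g a + ereal lam1" for a
    by (simp add: Pfun_def g_def q_def Om_def add.assoc)
  have memF: "a \<in> F \<longleftrightarrow> (\<forall>j\<in>{i+1..s}. l j \<le> a \<and> a \<le> u j)" for a
    unfolding F_def by auto
  have "0 \<in> F" using assms unfolding memF by auto
  then have ne: "F \<noteq> {}" by auto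
  have "F \<subseteq> {l s..u s}" using assms unfolding F_def by auto
  then have "bounded F" using bounded_subset bounded_closed_interval by blast
  moreover have "closed F" unfolding F_def by (intro closed_INT) auto
  ultimately have cF: "compact F" by (simp add: compact_eq_bounded_closed)
  have "continuous_on F q" unfolding q_def by (intro continuous_intros)
  then obtain a1 where a1: "a1 \<in> F" "\<forall>b\<in>F. q a1 \<le> q b"
    using continuous_attains_inf[OF cF ne] by blast
  define a0 where "a0 = (if g 0 \<le> g a1 then 0 else a1)"
  have ga0: "g a0 \<le> g 0" "g a0 \<le> g a1" unfolding a0_def by auto
  have gmin: "g a0 \<le> g a" for a
  proof (cases "a \<in> F")
    case False
    then obtain j where j: "j \<in> {i+1..s}" "omega l u lam2 j a = \<infinity>"
      unfolding memF omega_def by auto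
    have "Om a = \<infinity>" unfolding Om_def sum_Pinfty using j by auto
    then show ?thesis by (simp add: g_def)
  next
    case True
    show ?thesis
    proof (cases "a = 0")
      case True then show ?thesis using ga0 by simp
    next
      case False
      have "Om a1 \<le> Om a" unfolding Om_def
      proof (rule sum_mono)
        fix j assume j: "j \<in> {i+1..s}"
        then show "omega l u lam2 j a1 \<le> omega l u lam2 j a"
          using True a1(1) False assms unfolding memF omega_def l0norm_def by auto
      qed
      then have "g a1 \<le> g a" unfolding g_def using a1 True by (intro add_mono) auto
      then show ?thesis using ga0 by simp
    qed
  qed
  show ?thesis unfolding P using gmin by (intro exI[of _ a0] allI add_right_mono add_left_mono) auto
qed

lemma argmin_P:
  assumes "lam2 > 0" "\<forall>j\<in>{1..n}. l j \<le> 0 \<and> 0 \<le> u j" "s \<le> n" "1 \<le> s"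
  shows "\<exists>i<s. \<exists>a. \<forall>i'<s. \<forall>a'. Pfun z l u lam1 lam2 s i a \<le> Pfun z l u lam1 lam2 s i' a'"
proof -
  have "\<forall>i. \<exists>a0. i < s \<longrightarrow> (\<forall>a. Pfun z l u lam1 lam2 s i a0 \<le> Pfun z l u lam1 lam2 s i a)"
    using argmin_alpha[OF assms(1-3)] by blast
  then obtain f where f: "\<And>i a. i < s \<Longrightarrow> Pfun z l u lam1 lam2 s i (f i) \<le> Pfun z l u lam1 lam2 s i a"
    by metis
  define S where "S = (\<lambda>i. Pfun z l u lam1 lam2 s i (f i)) ` {..<s}"
  have "finite S" unfolding S_def by auto
  have "0 \<in> {..<s}" using assms by simp
  then have "S \<noteq> {}" unfolding S_def by blast
  then have "Min S \<in> S" using \<open>finite S\<close> by (intro Min_in)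
  then obtain i where i: "i < s" "Min S = Pfun z l u lam1 lam2 s i (f i)" unfolding S_def by auto
  have "Pfun z l u lam1 lam2 s i (f i) \<le> Pfun z l u lam1 lam2 s i' a'" if "i' < s" for i' a'
  proof -
    have "Min S \<le> Pfun z l u lam1 lam2 s i' (f i')"
      using \<open>finite S\<close> that unfolding S_def by (intro Min_le) auto
    also have "\<dots> \<le> Pfun z l u lam1 lam2 s i' a'" using f that by blast
    finally show ?thesis using i by simp
  qed
  then show ?thesis using i by blast
qed

lemma attain:
  assumes "lam1 > 0" "lam2 > 0" "\<forall>j\<in>{1..n}. l j \<le> 0 \<and> 0 \<le> u j"
  shows "s \<le> n \<Longrightarrow> \<exists>v. \<forall>v'. hfun z l u lam1 lam2 s v \<le> hfun z l u lam1 lam2 s v'"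
proof (induction s rule: less_induct)
  case (less s)
  show ?case
  proof (cases "s = 0")
    case True then show ?thesis by (simp add: hfun_def)
  next
    case False
    then obtain i a where ia: "i < s"
      "\<forall>i'<s. \<forall>a'. Pfun z l u lam1 lam2 s i a \<le> Pfun z l u lam1 lam2 s i' a'"
      using argmin_P[OF assms(2,3) less.prems] by force
    obtain v where v: "\<forall>v'. hfun z l u lam1 lam2 i v \<le> hfun z l u lam1 lam2 i v'"
      using less.IH[of i] ia less.prems by auto
    have "hfun z l u lam1 lam2 s (\<lambda>j. if j \<le> i then v j else a) \<le> hfun z l u lam1 lam2 s y'" for y'
    proof -
      have s1: "1 \<le> s" using False by simp
      obtain i' where "i' < s" "Pfun z l u lam1 lam2 s i' (y' s) \<le> hfun z l u lam1 lam2 s y'"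
        using lower[OF assms(1) s1] by blast
      then show ?thesis using upper[OF assms(1) ia(1) v, of a] ia(2) by (meson order_trans)
    qed
    then show ?thesis by blast
  qed
qed

theorem lemma3p3:
  fixes z l u :: "nat \<Rightarrow> real" and lam1 lam2 :: real and n s :: nat
  assumes "lam1 > 0" and "lam2 > 0"
    and "\<forall>i\<in>{1..n}. l i \<le> 0 \<and> 0 \<le> u i"
    and "s \<in> {1..n}"
  shows "(\<exists>i<s. \<exists>a. Hval z l u lam1 lam2 s = Pfun z l u lam1 lam2 s i a
            \<and> (\<forall>i'<s. \<forall>a'. Pfun z l u lam1 lam2 s i a \<le> Pfun z l u lam1 lam2 s i' a'))
    \<and> (\<forall>i a v. i < s
            \<longrightarrow> (\<forall>i'<s. \<forall>a'. Pfun z l u lam1 lam2 s i a \<le> Pfun z l u lam1 lam2 s i' a')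
            \<longrightarrow> (\<forall>v'. hfun z l u lam1 lam2 i v \<le> hfun z l u lam1 lam2 i v')
            \<longrightarrow> (\<forall>y'. hfun z l u lam1 lam2 s (\<lambda>j. if j \<le> i then v j else a)
                      \<le> hfun z l u lam1 lam2 s y'))"
proof
  have s1: "1 \<le> s" "s \<le> n" using assms(4) by auto
  have part2: "\<forall>i a v. i < s
            \<longrightarrow> (\<forall>i'<s. \<forall>a'. Pfun z l u lam1 lam2 s i a \<le> Pfun z l u lam1 lam2 s i' a')
            \<longrightarrow> (\<forall>v'. hfun z l u lam1 lam2 i v \<le> hfun z l u lam1 lam2 i v')
            \<longrightarrow> (\<forall>y'. hfun z l u lam1 lam2 s (\<lambda>j. if j \<le> i then v j else a)
                      \<le> hfun z l u lam1 lam2 s y')"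
  proof (intro allI impI)
    fix i a v y'
    assume ia: "i < s" "\<forall>i'<s. \<forall>a'. Pfun z l u lam1 lam2 s i a \<le> Pfun z l u lam1 lam2 s i' a'"
      and v: "\<forall>v'. hfun z l u lam1 lam2 i v \<le> hfun z l u lam1 lam2 i v'"
    obtain i' where "i' < s" "Pfun z l u lam1 lam2 s i' (y' s) \<le> hfun z l u lam1 lam2 s y'"
      using lower[OF assms(1) s1(1)] by blast
    then show "hfun z l u lam1 lam2 s (\<lambda>j. if j \<le> i then v j else a) \<le> hfun z l u lam1 lam2 s y'"
      using upper[OF assms(1) ia(1) v, of a] ia(2) by (meson order_trans)
  qed
  obtain i a where ia: "i < s"
      "\<forall>i'<s. \<forall>a'. Pfun z l u lam1 lam2 s i a \<le> Pfun z l u lam1 lam2 s i' a'"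
    using argmin_P[OF assms(2,3) s1(2,1)] by force
  obtain v where v: "\<forall>v'. hfun z l u lam1 lam2 i v \<le> hfun z l u lam1 lam2 i v'"
    using attain[OF assms(1-3), where s=i and z=z] ia s1 by auto
  have "Hval z l u lam1 lam2 s = Pfun z l u lam1 lam2 s i a"
  proof (rule antisym)
    have "Hval z l u lam1 lam2 s \<le> hfun z l u lam1 lam2 s (\<lambda>j. if j \<le> i then v j else a)"
      using Hval_le s1 by blast
    also have "\<dots> \<le> Pfun z l u lam1 lam2 s i a" using upper[OF assms(1) ia(1) v] .
    finally show "Hval z l u lam1 lam2 s \<le> Pfun z l u lam1 lam2 s i a" .
  next
    show "Pfun z l u lam1 lam2 s i a \<le> Hval z l u lam1 lam2 s"
      unfolding Hval_def using s1
    proof (simp, intro INF_greatest)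
      fix y
      obtain i' where "i' < s" "Pfun z l u lam1 lam2 s i' (y s) \<le> hfun z l u lam1 lam2 s y"
        using lower[OF assms(1) s1(1)] by blast
      then show "Pfun z l u lam1 lam2 s i a \<le> hfun z l u lam1 lam2 s y"
        using ia(2) by (meson order_trans)
    qed
  qed
  then show "\<exists>i<s. \<exists>a. Hval z l u lam1 lam2 s = Pfun z l u lam1 lam2 s i a
            \<and> (\<forall>i'<s. \<forall>a'. Pfun z l u lam1 lam2 s i a \<le> Pfun z l u lam1 lam2 s i' a')"
    using ia by blast
  show "\<forall>i a v. i < s
            \<longrightarrow> (\<forall>i'<s. \<forall>a'. Pfun z l u lam1 lam2 s i a \<le> Pfun z l u lam1 lam2 s i' a')
            \<longrightarrow> (\<forall>v'. hfun z l u lam1 lam2 i v \<le> hfun z l u lam1 lam2 i v')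
            \<longrightarrow> (\<forall>y'. hfun z l u lam1 lam2 s (\<lambda>j. if j \<le> i then v j else a)
                      \<le> hfun z l u lam1 lam2 s y')" by (rule part2)
qed

end
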